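(* If $\mathbf{Z}$ has a rotationally invariant distribution supported on the unit sphere, then Assumption (β) holds with $\beta=1$, i.e. $\max_{\mathbf{w}:\theta(\mathbf{w},\mathbf{w}_* )\le\phi}\lambda_{\max}(\mathbf{A}_{\mathbf{w},-\mathbf{w}_*})\le\phi$ for all $0\le\phi\le\pi/2$.
   Context: $\mathbf{Z}\in\mathbb{R}^p$ is a random vector, $\mathbf{w}_*\neq\mathbf{0}$ fixed, $\theta(\mathbf{u},\mathbf{v})\in[0,\pi]$ the angle between vectors, and $\mathbf{A}_{\mathbf{w},-\mathbf{w}_*}=\mathbb{E}[\mathbf{Z}\mathbf{Z}^\top\mathbb{I}\{\mathbf{w}^\top\mathbf{Z}\ge0,\mathbf{w}_*^\top\mathbf{Z}\le0\}]$. Assumption (β) with constant $\beta$: for all $0\le\phi\le\pi/2$, $\max_{\mathbf{w}:\theta(\mathbf{w},\mathbf{w}_* )\le\phi}\lambda_{\max}(\mathbf{A}_{\mathbf{w},-\mathbf{w}_*})\le\beta\phi$. *)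

theory Defs
  imports "HOL-Analysis.Analysis" "HOL-Probability.Probability"
begin

definition vec_angle :: "'a::real_inner \<Rightarrow> 'a \<Rightarrow> real" where
  "vec_angle u v = arccos ((u \<bullet> v) / (norm u * norm v))"

definition real_eigenvalues :: "real^'n^'n \<Rightarrow> real set" where
  "real_eigenvalues A = {c. \<exists>v. v \<noteq> 0 \<and> A *v v = c *\<^sub>R v}"

definition lambda_max :: "real^'n^'n \<Rightarrow> real" where
  "lambda_max A = Max (real_eigenvalues A)"

definition A_mat :: "(real^'n) measure \<Rightarrow> real^'n \<Rightarrow> real^'n \<Rightarrow> real^'n^'n" where
  "A_mat M w ws = (\<chi> i j. \<integral>z. z$i * z$j * (if w \<bullet> z \<ge> 0 \<and> ws \<bullet> z \<le> 0 then 1 else 0) \<partial>M)"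

end

theory Submission
  imports Defs
begin


definition rot :: "real^'n \<Rightarrow> real^'n \<Rightarrow> real \<Rightarrow> real^'n \<Rightarrow> real^'n" where
  "rot a b t z = z + ((cos t - 1) * (a \<bullet> z) - sin t * (b \<bullet> z)) *\<^sub>R a
                   + (sin t * (a \<bullet> z) + (cos t - 1) * (b \<bullet> z)) *\<^sub>R b"

lemma rot_linear: "linear (rot a b t)"
  unfolding rot_def by (intro linearI) (auto simp: inner_add_right inner_scaleR_right algebra_simps)

lemma rot_inner:
  assumes "a \<bullet> a = 1" "b \<bullet> b = 1" "a \<bullet> b = 0"
  shows "rot a b t v \<bullet> rot a b t w = v \<bullet> w"
proof -
  have ba: "b \<bullet> a = 0" using assms by (simp add: inner_commute)
  define co where "co = cos t" define si where "si = sin t"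
  have cs: "co* co + si* si = 1" unfolding co_def si_def by (metis sin_cos_squared_add3)
  define x where "x = a \<bullet> v" define y where "y = b \<bullet> v"
  define x' where "x' = a \<bullet> w" define y' where "y' = b \<bullet> w"
  have "rot a b t v \<bullet> rot a b t w = v \<bullet> w
     + ((co - 1) * x' - si * y') * x + (si * x' + (co - 1) * y') * y
     + ((co - 1) * x - si * y) * x' + (si * x + (co - 1) * y) * y'
     + ((co - 1) * x - si * y) * ((co - 1) * x' - si * y') + (si * x + (co - 1) * y) * (si * x' + (co - 1) * y')"
    unfolding rot_def co_def[symmetric] si_def[symmetric]
    by (simp add: inner_add_left inner_add_right inner_scaleR_left inner_scaleR_right assms ba
        x_def y_def x'_def y'_def inner_commute algebra_simps)
  also have "\<dots> = v \<bullet> w + (co* co + si* si - 1) * (x* x' + y* y')" by (simp add: algebra_simps)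
  also have "\<dots> = v \<bullet> w" using cs by simp
  finally show ?thesis .
qed

lemma rot_orth:
  assumes "a \<bullet> a = 1" "b \<bullet> b = 1" "a \<bullet> b = 0"
  shows "orthogonal_transformation (rot a b t)"
  using rot_linear rot_inner[OF assms] unfolding orthogonal_transformation_def by blast

lemma rot_a:
  assumes "a \<bullet> a = 1" "b \<bullet> b = 1" "a \<bullet> b = 0"
  shows "a \<bullet> rot a b (-t) z = cos t * (a \<bullet> z) + sin t * (b \<bullet> z)"
  using assms by (simp add: rot_def inner_add_right algebra_simps)

lemma rot_b:
  assumes "a \<bullet> a = 1" "b \<bullet> b = 1" "a \<bullet> b = 0"
  shows "b \<bullet> rot a b (-t) z = - sin t * (a \<bullet> z) + cos t * (b \<bullet> z)"
  using assms by (simp add: rot_def inner_add_right inner_commute algebra_simps)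

lemma rot_u:
  assumes "u \<bullet> a = 0" "u \<bullet> b = 0"
  shows "u \<bullet> rot a b t z = u \<bullet> z"
  using assms by (simp add: rot_def inner_add_right)

lemma rot_ut:
  assumes "a \<bullet> a = 1" "b \<bullet> b = 1" "a \<bullet> b = 0"
  shows "(cos s *\<^sub>R a + sin s *\<^sub>R b) \<bullet> rot a b (-t) z = (cos (s+t) *\<^sub>R a + sin (s+t) *\<^sub>R b) \<bullet> z"
  using assms by (simp add: inner_add_left rot_a rot_b cos_add sin_add algebra_simps)


lemma two_lines:
  fixes x y s t :: real
  assumes "x * cos s + y * sin s = 0" "x * cos t + y * sin t = 0" "sin (t - s) \<noteq> 0"
  shows "x = 0 \<and> y = 0"
proof -
  have "sin (t - s) * x = sin t * (x * cos s + y * sin s) - sin s * (x * cos t + y * sin t)"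
    by (simp add: sin_diff algebra_simps)
  then have "sin (t - s) * x = 0" using assms(1,2) by simp
  moreover have "sin (t - s) * y = cos s * (x * cos t + y * sin t) - cos t * (x * cos s + y * sin s)"
    by (simp add: sin_diff algebra_simps)
  then have "sin (t - s) * y = 0" using assms(1,2) by simp
  ultimately show ?thesis using assms(3) by simp
qed

definition X :: "(real^'n) set \<Rightarrow> (real^'n) set" where
  "X B = {z. \<forall>c\<in>B. c \<bullet> z = 0}"

lemma closed_X: "closed (X B)"
proof -
  have "X B = (\<Inter>c\<in>B. {z. c \<bullet> z = 0})" unfolding X_def by auto
  then show ?thesis by (simp add: closed_INT closed_hyperplane)
qed

lemma interp_id:
  fixes x y s t v :: real
  shows "(x * cos s + y * sin s) * sin (v - t) = (x * cos t + y * sin t) * sin (v - s) + (x * cos v + y * sin v) * sin (s - t)"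
  by (simp add: sin_diff algebra_simps)

lemma closed_wedge: "closed {z. u \<bullet> z \<le> (0::real) \<and> 0 \<le> v \<bullet> z}"
proof -
  have "{z. u \<bullet> z \<le> (0::real) \<and> 0 \<le> v \<bullet> z} = {z. u \<bullet> z \<le> 0} \<inter> {z. v \<bullet> z \<ge> 0}" by auto
  then show ?thesis by (simp add: closed_Int closed_halfspace_le closed_halfspace_ge)
qed

locale rinv =
  fixes M :: "(real^'n) measure"
  assumes prob: "prob_space M"
    and sets_M: "sets M = sets borel"
    and AE1: "AE z in M. norm z = 1"
    and inv: "\<And>f. orthogonal_transformation f \<Longrightarrow> distr M borel f = M"
begin

interpretation P: prob_space M by (rule prob)

lemma space_M: "space M = UNIV"
  using sets_eq_imp_space_eq[OF sets_M] by simp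

lemma borel_M: "A \<in> sets borel \<Longrightarrow> A \<in> sets M"
  using sets_M by simp

lemma closed_M: "closed A \<Longrightarrow> A \<in> sets M"
  using sets_M by simp

lemma inv_meas:
  assumes f: "orthogonal_transformation f" and A: "A \<in> sets borel"
  shows "measure M {z. f z \<in> A} = measure M A"
proof -
  have "continuous_on UNIV f"
    using f by (intro linear_continuous_on) (metis orthogonal_transformation_def linear_conv_bounded_linear)
  then have "f \<in> borel_measurable borel" by (rule borel_measurable_continuous_onI)
  then have fm: "f \<in> measurable M borel" by (subst measurable_cong_sets[OF sets_M refl])
  have "measure M A = measure (distr M borel f) A" using inv[OF f] by simp
  also have "\<dots> = measure M (f -` A \<inter> space M)" by (rule measure_distr[OF fm A])
  also have "f -` A \<inter> space M = {z. f z \<in> A}" using space_M by auto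
  finally show ?thesis by simp
qed

lemma zero_null: "measure M {0} = 0"
proof -
  from AE1 obtain N where N: "{x \<in> space M. \<not> norm x = 1} \<subseteq> N" "N \<in> null_sets M"
    unfolding eventually_ae_filter by blast
  have "(0::real^'n) \<in> {x \<in> space M. \<not> norm x = 1}" using space_M by simp
  then have sub: "{0} \<subseteq> N" using N(1) by blast
  have "{0::real^'n} \<in> sets M" by (intro closed_M) simp
  then have "{0} \<in> null_sets M" by (rule null_sets_subset[OF N(2) _ sub])
  then show ?thesis by (simp add: measure_def null_setsD1)
qed

lemma step:
  fixes a b :: "real^'n"
  assumes a: "a \<bullet> a = 1" and b: "b \<bullet> b = 1" and ab: "a \<bullet> b = 0"
    and B: "\<forall>c\<in>B. c \<bullet> a = 0 \<and> c \<bullet> b = 0"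
  shows "measure M (X (insert a B)) = measure M (X (insert a (insert b B)))"
proof -
  define H where "H t = {z. (\<forall>c\<in>B. c \<bullet> z = 0) \<and> (cos t *\<^sub>R a + sin t *\<^sub>R b) \<bullet> z = 0}" for t
  define L where "L = X (insert a (insert b B))"
  have H0: "X (insert a B) = H 0" unfolding H_def X_def by auto
  have Hcl: "closed (H t)" for t
  proof -
    have "H t = X (insert (cos t *\<^sub>R a + sin t *\<^sub>R b) B)" unfolding H_def X_def by auto
    then show ?thesis using closed_X by simp
  qed
  have Hpre: "{z. rot a b (-t) z \<in> H 0} = H t" for t
    using B rot_ut[OF a b ab, of 0 t] rot_u[of _ a b] unfolding H_def by auto
  have Hm: "measure M (H t) = measure M (H 0)" for t
    using inv_meas[OF rot_orth[OF a b ab, of "-t"], of "H 0"] Hpre[of t] Hcl[of 0] by simp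
  have LH: "L \<subseteq> H t" for t unfolding L_def H_def X_def by (auto simp: inner_add_left)
  have Lcl: "closed L" unfolding L_def by (rule closed_X)
  have inter: "z \<in> L" if "z \<in> H s" "z \<in> H t" "0 \<le> s" "s < t" "t < pi" for z s t
  proof -
    have "sin (t - s) > 0" using that by (intro sin_gt_zero) auto
    moreover have "(a \<bullet> z) * cos s + (b \<bullet> z) * sin s = 0" "(a \<bullet> z) * cos t + (b \<bullet> z) * sin t = 0"
      using that(1,2) unfolding H_def by (auto simp: inner_add_left algebra_simps)
    ultimately have "a \<bullet> z = 0 \<and> b \<bullet> z = 0" using two_lines by (metis less_irrefl)
    then show ?thesis using that(1) unfolding L_def H_def X_def by auto
  qed
  have key: "real K * (measure M (H 0) - measure M L) \<le> 1" if K: "K > 0" for K :: nat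
  proof -
    define D where "D k = H (real k * pi / real K) - L" for k :: nat
    have disj: "disjoint_family_on D {..<K}"
    unfolding disjoint_family_on_def
    proof (intro ballI impI)
      fix k l assume kl: "k \<in> {..<K}" "l \<in> {..<K}" "k \<noteq> l"
      have lt: "real k * pi / real K < real l * pi / real K" if "k < l" "l < K" for k l :: nat
        using that K by (intro divide_strict_right_mono mult_strict_right_mono) auto
      have ltpi: "real l * pi / real K < pi" if "l < K" for l :: nat
        using that K by (simp add: field_simps)
      have nn: "0 \<le> real k * pi / real K" for k :: nat by simp
      have kK: "k < K" and lK: "l < K" using kl by auto
      have "z \<in> L" if z: "z \<in> H (real k * pi / real K)" "z \<in> H (real l * pi / real K)" for z
      proof (cases "k < l")
        case True then show ?thesis using inter[OF z nn lt[OF True lK] ltpi[OF lK]] by simp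
      next
        case False then have "l < k" using kl by simp
        then show ?thesis using inter[OF z(2) z(1) nn lt[OF _ kK] ltpi[OF kK]] by simp
      qed
      then show "D k \<inter> D l = {}" unfolding D_def by blast
    qed
    have Dsets: "D k \<in> sets M" for k
      unfolding D_def by (intro sets.Diff closed_M Hcl Lcl)
    have Dm: "measure M (D k) = measure M (H 0) - measure M L" for k
      unfolding D_def using P.finite_measure_Diff[OF closed_M[OF Hcl] closed_M[OF Lcl] LH] Hm by simp
    have "measure M (\<Union>k\<in>{..<K}. D k) = (\<Sum>k\<in>{..<K}. measure M (D k))"
      using disj Dsets by (intro P.finite_measure_finite_Union) auto
    also have "\<dots> = real K * (measure M (H 0) - measure M L)" using Dm by simp
    finally show ?thesis using P.prob_le_1 by metis
  qed
  have "measure M (H 0) - measure M L \<le> 0"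
  proof (rule ccontr)
    assume "\<not> ?thesis"
    then have "0 < measure M (H 0) - measure M L" by simp
    then obtain n where "1 < real n * (measure M (H 0) - measure M L)" using ex_less_of_nat_mult by blast
    moreover have "n > 0" using calculation by (cases n) auto
    ultimately show False using key[of n] by simp
  qed
  moreover have "measure M L \<le> measure M (H 0)"
    using P.finite_measure_mono[OF LH closed_M[OF Hcl]] by simp
  ultimately show ?thesis using H0 L_def by simp
qed


definition onset :: "(real^'n) set \<Rightarrow> bool" where
  "onset B \<longleftrightarrow> (\<forall>c\<in>B. c \<bullet> c = 1) \<and> (\<forall>u\<in>B. \<forall>v\<in>B. u \<noteq> v \<longrightarrow> u \<bullet> v = 0)"

lemma onset_indep:
  assumes "onset B" shows "independent B"
proof (rule pairwise_orthogonal_independent)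
  show "pairwise orthogonal B" using assms unfolding onset_def pairwise_def orthogonal_def by blast
  show "0 \<notin> B" using assms unfolding onset_def by force
qed

lemma X_null_aux:
  "\<forall>B. B \<noteq> {} \<and> onset B \<and> DIM(real^'n) - card B = k \<longrightarrow> measure M (X (B :: (real^'n) set)) = 0"
proof (induction k rule: less_induct)
  case (less k)
  show ?case
  proof (intro allI impI)
    fix B :: "(real^'n) set"
    assume asm: "B \<noteq> {} \<and> onset B \<and> DIM(real^'n) - card B = k"
    have ind: "independent B" using asm onset_indep by blast
    then have fin: "finite B" and cle: "card B \<le> DIM(real^'n)" using independent_bound by blast+
    have dimB: "dim B = card B" using dim_span_eq_card_independent[OF ind] by simp
    show "measure M (X B) = 0"
    proof (cases "card B < DIM(real^'n)")
      case True
      then have dlt: "dim B < DIM(real^'n)" using dimB by simp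
      obtain x :: "real^'n" where x: "x \<noteq> 0" "\<And>y. y \<in> span B \<Longrightarrow> orthogonal x y"
        by (metis orthogonal_to_subspace_exists[OF dlt])
      define b where "b = x /\<^sub>R norm x"
      have nb: "norm b = 1" unfolding b_def using x(1) by simp
      have bb: "b \<bullet> b = 1" using nb by (simp add: dot_square_norm)
      have bB: "b \<bullet> y = 0" if "y \<in> B" for y
        using x(2)[OF span_base[OF that]] unfolding b_def orthogonal_def by simp
      obtain a where aB: "a \<in> B" using asm by blast
      have on: "onset B" using asm by blast
      have aa: "a \<bullet> a = 1" using on aB unfolding onset_def by blast
      have ab: "a \<bullet> b = 0" using bB[OF aB] by (simp add: inner_commute)
      have B': "\<forall>c\<in>B - {a}. c \<bullet> a = 0 \<and> c \<bullet> b = 0"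
      proof
        fix c assume c: "c \<in> B - {a}"
        have "c \<bullet> a = 0" using on aB c unfolding onset_def by blast
        moreover have "c \<bullet> b = 0" using bB[of c] c by (simp add: inner_commute)
        ultimately show "c \<bullet> a = 0 \<and> c \<bullet> b = 0" by simp
      qed
      have e1: "insert a (B - {a}) = B" using aB by blast
      have e2: "insert a (insert b (B - {a})) = insert b B" using aB by blast
      have "measure M (X B) = measure M (X (insert b B))"
        using step[OF aa bb ab B'] e1 e2 by simp
      moreover have bnot: "b \<notin> B"
      proof
        assume "b \<in> B" then have "b \<bullet> b = 0" by (rule bB)
        then show False using bb by simp
      qed
      have on2: "onset (insert b B)"
        unfolding onset_def
      proof (intro conjI ballI impI)
        fix c assume "c \<in> insert b B" then show "c \<bullet> c = 1" using on bb unfolding onset_def by blast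
      next
        fix u v assume u: "u \<in> insert b B" and v: "v \<in> insert b B" and uv: "u \<noteq> v"
        show "u \<bullet> v = 0"
        proof (cases "u = b")
          case True then have "v \<in> B" using v uv by blast
          then show ?thesis using bB True by blast
        next
          case False then have uB: "u \<in> B" using u by blast
          show ?thesis
          proof (cases "v = b")
            case True then show ?thesis using bB[OF uB] by (simp add: inner_commute)
          next
            case False then have "v \<in> B" using v by blast
            then show ?thesis using on uB uv unfolding onset_def by blast
          qed
        qed
      qed
      have c1: "card (insert b B) = card B + 1" using fin bnot by simp
      have kk: "DIM(real^'n) - card B = k" using asm by blast
      have lt: "DIM(real^'n) - card (insert b B) < k" using True kk c1 by arith
      have "measure M (X (insert b B)) = 0" using less.IH[OF lt, rule_format, of "insert b B"] on2 by simp
      ultimately show ?thesis by simp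
    next
      case False
      then have "dim B = DIM(real^'n)" using dimB cle by simp
      then have spanU: "span B = UNIV" using dim_eq_full by blast
      have "X B \<subseteq> {0}"
      proof
        fix z assume z: "z \<in> X B"
        have "orthogonal z z"
          by (rule orthogonal_to_span[of z B z]) (use z spanU in \<open>auto simp: X_def orthogonal_def inner_commute\<close>)
        then show "z \<in> {0}" by (simp add: orthogonal_def)
      qed
      then have "measure M (X B) \<le> measure M {0}"
        by (intro P.finite_measure_mono) (auto intro: closed_M)
      then show ?thesis using zero_null measure_nonneg[of M "X B"] by simp
    qed
  qed
qed

lemma X_null: "B \<noteq> {} \<Longrightarrow> onset B \<Longrightarrow> measure M (X B) = 0"
  using X_null_aux by blast

lemma hyp_null:
  assumes "c \<bullet> c = 1" shows "measure M {z. c \<bullet> z = 0} = 0"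
proof -
  have "onset {c}" using assms unfolding onset_def by simp
  then have "measure M (X {c}) = 0" by (intro X_null) auto
  moreover have "X {c} = {z. c \<bullet> z = 0}" unfolding X_def by simp
  ultimately show ?thesis by simp
qed


lemma wedge:
  fixes a b :: "real^'n" and th :: real
  assumes a: "a \<bullet> a = 1" and b: "b \<bullet> b = 1" and ab: "a \<bullet> b = 0"
    and th0: "0 < th" and th1: "th \<le> pi / 2"
  shows "measure M {z. a \<bullet> z \<le> 0 \<and> 0 \<le> (cos th *\<^sub>R a + sin th *\<^sub>R b) \<bullet> z} \<le> th"
proof -
  define u where "u t = cos t *\<^sub>R a + sin t *\<^sub>R b" for t
  define g where "g t z = (a \<bullet> z) * cos t + (b \<bullet> z) * sin t" for t z
  have ug: "u t \<bullet> z = g t z" for t z unfolding u_def g_def by (simp add: inner_add_left)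
  have uu: "u t \<bullet> u t = 1" for t
    unfolding u_def using a b ab
    by (simp add: inner_add_left inner_add_right inner_commute algebra_simps)
  define S where "S j = {z. u (real j * th) \<bullet> z \<le> 0 \<and> 0 \<le> u (real (Suc j) * th) \<bullet> z}" for j :: nat
  have S0: "S 0 = {z. a \<bullet> z \<le> 0 \<and> 0 \<le> (cos th *\<^sub>R a + sin th *\<^sub>R b) \<bullet> z}"
    unfolding S_def u_def by simp
  have Scl: "closed (S j)" for j unfolding S_def by (rule closed_wedge)
  have Spre: "{z. rot a b (- (real j * th)) z \<in> S 0} = S j" for j
  proof -
    have e1: "u 0 \<bullet> rot a b (- (real j * th)) z = u (real j * th) \<bullet> z" for z
      using rot_ut[OF a b ab, of 0 "real j * th" z] unfolding u_def by simp
    have e2: "u th \<bullet> rot a b (- (real j * th)) z = u (real (Suc j) * th) \<bullet> z" for z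
      using rot_ut[OF a b ab, of th "real j * th" z] unfolding u_def by (simp add: algebra_simps)
    show ?thesis unfolding S_def using e1 e2 by simp
  qed
  have Sm: "measure M (S j) = measure M (S 0)" for j
    using inv_meas[OF rot_orth[OF a b ab, of "- (real j * th)"], of "S 0"] Spre[of j] Scl[of 0] by simp
  define N where "N = nat \<lfloor>pi / th\<rfloor>"
  have pith: "pi / th \<ge> 2" using th0 th1 by (simp add: field_simps)
  have N1: "real N \<le> pi / th" unfolding N_def using pith by linarith
  have N2: "pi / th - 1 < real N" unfolding N_def using pith by linarith
  have Nth: "real N * th \<le> pi" using N1 th0 by (simp add: field_simps)
  have Npos: "N > 0" using N2 pith by linarith
  define Z where "Z = (\<Union>k\<in>{..N}. {z. u (real k * th) \<bullet> z = 0})"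
  have Zk: "{z. u (real k * th) \<bullet> z = 0} \<in> sets M" for k by (intro closed_M closed_hyperplane)
  have Zs: "Z \<in> sets M" unfolding Z_def using Zk by auto
  have "measure M Z \<le> (\<Sum>k\<in>{..N}. measure M {z. u (real k * th) \<bullet> z = 0})"
    unfolding Z_def using Zk by (intro P.finite_measure_subadditive_finite) auto
  also have "\<dots> = 0" using hyp_null[OF uu] by simp
  finally have Z0: "measure M Z = 0" using measure_nonneg[of M Z] by linarith
  define D where "D j = S j - Z" for j
  have Dsets: "D j \<in> sets M" for j unfolding D_def by (intro sets.Diff closed_M Scl Zs)
  have Dm: "measure M (D j) = measure M (S 0)" for j
  proof -
    have "measure M (D j) = measure M (S j) - measure M (S j \<inter> Z)"
      unfolding D_def by (intro P.finite_measure_Diff' closed_M Scl Zs)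
    moreover have "measure M (S j \<inter> Z) \<le> measure M Z" by (intro P.finite_measure_mono Zs) auto
    ultimately show ?thesis using Z0 Sm[of j] measure_nonneg[of M "S j \<inter> Z"] by linarith
  qed
  have notin: "z \<notin> Z \<Longrightarrow> k \<le> N \<Longrightarrow> g (real k * th) z \<noteq> 0" for z k
    unfolding Z_def using ug by auto
  have disj: "disjoint_family_on D {..<N}"
    unfolding disjoint_family_on_def
  proof (intro ballI impI)
    fix j k assume jk: "j \<in> {..<N}" "k \<in> {..<N}" "j \<noteq> k"
    have main: "False" if z: "z \<in> D j" "z \<in> D k" and lt: "j < k" and kN: "k < N" for z j k
    proof -
      define t2 where "t2 = real (Suc j) * th"
      define t3 where "t3 = real k * th"
      define t4 where "t4 = real (Suc k) * th"
      have zZ: "z \<notin> Z" using z unfolding D_def by auto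
      have g2: "g t2 z \<ge> 0" using z unfolding D_def S_def t2_def ug by auto
      have g3: "g t3 z \<le> 0" using z unfolding D_def S_def t3_def ug by auto
      have g4: "g t4 z \<ge> 0" using z unfolding D_def S_def t4_def ug by auto
      have g2': "g t2 z \<noteq> 0" unfolding t2_def using notin[OF zZ, of "Suc j"] lt kN by simp
      have g3': "g t3 z \<noteq> 0" unfolding t3_def using notin[OF zZ, of k] lt kN by simp
      have g2p: "g t2 z > 0" using g2 g2' by simp
      have g3n: "g t3 z < 0" using g3 g3' by simp
      show False
      proof (cases "Suc j = k")
        case True then show False using g2p g3n unfolding t2_def t3_def by simp
      next
        case False
        then have jk2: "Suc j < k" using lt by simp
        have "real (Suc j) * th < real k * th" using jk2 th0 by (intro mult_strict_right_mono) auto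
        then have d23: "0 < t3 - t2" unfolding t2_def t3_def by simp
        have d34: "t4 - t3 = th" unfolding t3_def t4_def by (simp add: algebra_simps)
        have t2pos: "t2 \<ge> th" unfolding t2_def using th0 by simp
        have t4le: "t4 \<le> pi"
        proof -
          have "real (Suc k) * th \<le> real N * th" using kN th0 by (intro mult_right_mono) auto
          then show ?thesis unfolding t4_def using Nth by simp
        qed
        have s24: "sin (t4 - t2) > 0" using d23 d34 t2pos t4le th0 by (intro sin_gt_zero) auto
        have s34: "sin (t4 - t3) \<ge> 0" using d34 th0 th1 by (intro sin_ge_zero) auto
        have s23: "sin (t3 - t2) \<ge> 0" using d23 d34 t2pos t4le th0 by (intro sin_ge_zero) auto
        have "g t3 z * sin (t4 - t2) = g t2 z * sin (t4 - t3) + g t4 z * sin (t3 - t2)"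
          unfolding g_def by (rule interp_id)
        moreover have "g t3 z * sin (t4 - t2) < 0" using g3n s24 by (simp add: mult_neg_pos)
        moreover have "g t2 z * sin (t4 - t3) + g t4 z * sin (t3 - t2) \<ge> 0"
          using g2 g4 s34 s23 by simp
        ultimately show False by linarith
      qed
    qed
    show "D j \<inter> D k = {}"
    proof (cases "j < k")
      case True then show ?thesis using main[of _ j k] jk by blast
    next
      case False then have "k < j" using jk by simp
      then show ?thesis using main[of _ k j] jk by blast
    qed
  qed
  have "measure M (\<Union>j\<in>{..<N}. D j) = (\<Sum>j\<in>{..<N}. measure M (D j))"
    using disj Dsets by (intro P.finite_measure_finite_Union) auto
  also have "\<dots> = real N * measure M (S 0)" using Dm by simp
  finally have NS: "real N * measure M (S 0) \<le> 1" using P.prob_le_1 by metis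
  have "1 \<le> real N * th"
  proof -
    have "(pi / th - 1) * th = pi - th" using th0 by (simp add: field_simps)
    moreover have "(pi / th - 1) * th \<le> real N * th" using N2 th0 by (intro mult_right_mono) auto
    ultimately show ?thesis using th1 pi_gt3 by linarith
  qed
  then have "real N * measure M (S 0) \<le> real N * th" using NS by linarith
  then have "measure M (S 0) \<le> th" using Npos by simp
  then show ?thesis using S0 by simp
qed

end



lemma sym_inner:
  fixes A :: "real^'n^'n"
  assumes s: "\<And>i j. A$i$j = A$j$i"
  shows "x \<bullet> (A *v y) = (A *v x) \<bullet> y"
proof -
  have "x \<bullet> (A *v y) = (\<Sum>i\<in>UNIV. \<Sum>j\<in>UNIV. x$i * A$i$j * y$j)"
    by (simp add: inner_vec_def matrix_vector_mult_def sum_distrib_left mult.assoc)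
  also have "\<dots> = (\<Sum>j\<in>UNIV. \<Sum>i\<in>UNIV. x$i * A$i$j * y$j)" by (rule sum.swap)
  also have "\<dots> = (A *v x) \<bullet> y"
    by (simp add: inner_vec_def matrix_vector_mult_def sum_distrib_right sum_distrib_left s mult_ac)
  finally show ?thesis .
qed

lemma psd_zero:
  fixes A :: "real^'n^'n"
  assumes s: "\<And>i j. A$i$j = A$j$i"
    and psd: "\<And>v. 0 \<le> l * (v \<bullet> v) - v \<bullet> (A *v v)"
    and z: "l * (v0 \<bullet> v0) - v0 \<bullet> (A *v v0) = 0"
  shows "A *v v0 = l *\<^sub>R v0"
proof -
  define r where "r = l *\<^sub>R v0 - A *v v0"
  define c where "c = r \<bullet> r"
  define K where "K = l * (r \<bullet> r) - r \<bullet> (A *v r)"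
  have sy: "v0 \<bullet> (A *v r) = r \<bullet> (A *v v0)"
    using sym_inner[OF s, of v0 r] by (simp add: inner_commute)
  have ex: "l * ((v0 + t *\<^sub>R r) \<bullet> (v0 + t *\<^sub>R r)) - (v0 + t *\<^sub>R r) \<bullet> (A *v (v0 + t *\<^sub>R r))
        = 2 * t * c + t^2 * K" for t
  proof -
    have "l * ((v0 + t *\<^sub>R r) \<bullet> (v0 + t *\<^sub>R r)) - (v0 + t *\<^sub>R r) \<bullet> (A *v (v0 + t *\<^sub>R r))
       = (l * (v0 \<bullet> v0) - v0 \<bullet> (A *v v0)) + 2 * t * (l * (r \<bullet> v0) - r \<bullet> (A *v v0)) + t^2 * K"
      unfolding K_def
      by (simp add: inner_add_left inner_add_right matrix_vector_right_distrib matrix_vector_mult_scaleR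
          sy inner_commute[of v0 r] algebra_simps power2_eq_square)
    also have "l * (r \<bullet> v0) - r \<bullet> (A *v v0) = c"
      unfolding c_def by (simp add: r_def inner_diff_left inner_diff_right inner_commute algebra_simps)
    finally show ?thesis using z by simp
  qed
  have c0: "c \<le> 0"
  proof (rule ccontr)
    assume "\<not> c \<le> 0" then have cp: "c > 0" by simp
    define t where "t = - c / (\<bar>K\<bar> + 1)"
    have "0 \<le> 2 * t * c + t^2 * K" using psd[of "v0 + t *\<^sub>R r"] ex[of t] by simp
    moreover have "2 * t * c + t^2 * K < 0"
    proof -
      have d: "\<bar>K\<bar> + 1 > 0" by simp
      have "t^2 * K \<le> t^2 * \<bar>K\<bar>" by (intro mult_left_mono) auto
      also have "t^2 * \<bar>K\<bar> = c^2 * \<bar>K\<bar> / (\<bar>K\<bar> + 1)^2" unfolding t_def by (simp add: power_divide)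
      also have "\<dots> = (c^2 / (\<bar>K\<bar> + 1)) * (\<bar>K\<bar> / (\<bar>K\<bar> + 1))"
        by (simp add: power2_eq_square)
      also have "\<dots> \<le> (c^2 / (\<bar>K\<bar> + 1)) * 1"
        using d by (intro mult_left_mono) auto
      also have "\<dots> = c^2 / (\<bar>K\<bar> + 1)" by simp
      finally have "t^2 * K \<le> c^2 / (\<bar>K\<bar> + 1)" .
      moreover have "2 * t * c = - 2 * (c^2 / (\<bar>K\<bar> + 1))" unfolding t_def by (simp add: power2_eq_square)
      moreover have "c^2 / (\<bar>K\<bar> + 1) > 0" using cp d by simp
      ultimately show ?thesis by linarith
    qed
    ultimately show False by simp
  qed
  then have "r = 0" unfolding c_def using inner_ge_zero[of r] by (metis inner_eq_zero_iff order_antisym)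
  then show ?thesis unfolding r_def by simp
qed


lemma sym_eig_exists:
  fixes A :: "real^'n^'n"
  assumes s: "\<And>i j. A$i$j = A$j$i"
  shows "real_eigenvalues A \<noteq> {}"
proof -
  define q where "q v = v \<bullet> (A *v v)" for v :: "real^'n"
  have cont: "continuous_on (sphere 0 1) q"
    unfolding q_def
    by (intro continuous_on_inner continuous_on_id linear_continuous_on matrix_vector_mul_bounded_linear)
  have ne: "sphere (0::real^'n) 1 \<noteq> {}"
  proof -
    obtain k :: 'n where True by simp
    have "axis k (1::real) \<in> sphere 0 1" by simp
    then show ?thesis by blast
  qed
  obtain v0 where v0: "v0 \<in> sphere 0 1" and mx: "\<And>y. y \<in> sphere 0 1 \<Longrightarrow> q y \<le> q v0"
    using continuous_attains_sup[OF compact_sphere ne cont] by blast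
  define l where "l = q v0"
  have nv0: "norm v0 = 1" using v0 by simp
  have vv0: "v0 \<bullet> v0 = 1" using nv0 by (simp add: dot_square_norm)
  have psd: "0 \<le> l * (v \<bullet> v) - v \<bullet> (A *v v)" for v
  proof (cases "v = 0")
    case True then show ?thesis by simp
  next
    case False
    define u where "u = v /\<^sub>R norm v"
    have "u \<in> sphere 0 1" unfolding u_def using False by simp
    then have "q u \<le> l" using mx unfolding l_def by blast
    moreover have "q v = (norm v)^2 * q u"
      unfolding q_def u_def using False
      by (simp add: matrix_vector_mult_scaleR power2_eq_square field_simps)
    moreover have "v \<bullet> v = (norm v)^2" by (simp add: dot_square_norm)
    ultimately have "q v \<le> l * (v \<bullet> v)"
      by (metis mult.commute mult_right_mono zero_le_power2)
    then show ?thesis unfolding q_def by simp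
  qed
  have "A *v v0 = l *\<^sub>R v0"
    by (rule psd_zero[OF s psd]) (simp add: vv0 l_def q_def)
  moreover have "v0 \<noteq> 0" using nv0 by auto
  ultimately show ?thesis unfolding real_eigenvalues_def by blast
qed

lemma sym_eig_finite:
  fixes A :: "real^'n^'n"
  assumes s: "\<And>i j. A$i$j = A$j$i"
  shows "finite (real_eigenvalues A)"
proof -
  define E where "E = real_eigenvalues A"
  define g where "g c = (SOME v. v \<noteq> 0 \<and> A *v v = c *\<^sub>R v)" for c
  have gE: "g c \<noteq> 0 \<and> A *v g c = c *\<^sub>R g c" if "c \<in> E" for c
  proof -
    have "\<exists>v. v \<noteq> 0 \<and> A *v v = c *\<^sub>R v" using that unfolding E_def real_eigenvalues_def by simp
    then show ?thesis unfolding g_def by (rule someI_ex)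
  qed
  have orth: "g c \<bullet> g d = 0" if "c \<in> E" "d \<in> E" "c \<noteq> d" for c d
  proof -
    have "c * (g c \<bullet> g d) = (A *v g c) \<bullet> g d" using gE[OF that(1)] by simp
    also have "\<dots> = g c \<bullet> (A *v g d)" using sym_inner[OF s] by simp
    also have "\<dots> = d * (g c \<bullet> g d)" using gE[OF that(2)] by simp
    finally show ?thesis using that(3) by simp
  qed
  have inj: "inj_on g E"
  proof (rule inj_onI)
    fix c d assume cd: "c \<in> E" "d \<in> E" "g c = g d"
    show "c = d"
    proof (rule ccontr)
      assume "c \<noteq> d"
      then have "g c \<bullet> g c = 0" using orth[OF cd(1,2)] cd(3) by simp
      then show False using gE[OF cd(1)] by simp
    qed
  qed
  have "independent (g ` E)"
  proof (rule pairwise_orthogonal_independent)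
    show "pairwise orthogonal (g ` E)"
      unfolding pairwise_def orthogonal_def using orth by auto
    show "0 \<notin> g ` E" using gE by auto
  qed
  then have "finite (g ` E)" using independent_bound by blast
  then have "finite E" using finite_imageD inj by blast
  then show ?thesis unfolding E_def .
qed

lemma lambda_max_le:
  fixes A :: "real^'n^'n"
  assumes s: "\<And>i j. A$i$j = A$j$i" and b: "\<And>c. c \<in> real_eigenvalues A \<Longrightarrow> c \<le> B"
  shows "lambda_max A \<le> B"
  unfolding lambda_max_def using sym_eig_finite[OF s] sym_eig_exists[OF s] b by simp



context rinv begin

interpretation P: prob_space M by (rule prob)

lemma meas_M: "f \<in> borel_measurable borel \<Longrightarrow> f \<in> borel_measurable M"
  by (subst measurable_cong_sets[OF sets_M refl])

lemma cont_M: "continuous_on UNIV (f :: real^'n \<Rightarrow> real) \<Longrightarrow> f \<in> borel_measurable M"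
  by (intro meas_M borel_measurable_continuous_onI)

lemma eig_bound:
  fixes w ws v :: "real^'n" and c :: real
  assumes v: "v \<noteq> 0" and ev: "A_mat M w ws *v v = c *\<^sub>R v"
  shows "c \<le> measure M {z. 0 \<le> w \<bullet> z \<and> ws \<bullet> z \<le> 0}"
proof -
  define S where "S = {z. 0 \<le> w \<bullet> z \<and> ws \<bullet> z \<le> 0}"
  have Scl: "closed S" unfolding S_def
    using closed_wedge[of ws w] by (simp add: conj_commute)
  have SM: "S \<in> sets M" by (rule closed_M[OF Scl])
  define ind where "ind z = (if 0 \<le> w \<bullet> z \<and> ws \<bullet> z \<le> 0 then 1 else 0 :: real)" for z
  have ind_eq: "ind = indicator S" unfolding ind_def S_def by (auto simp: indicator_def)
  have ind_meas: "ind \<in> borel_measurable M" unfolding ind_eq using SM by simp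
  have ind01: "0 \<le> ind z \<and> ind z \<le> 1" for z unfolding ind_def by simp
  define f where "f i j z = z$i * z$j * ind z" for i j z
  have comp_cont: "continuous_on UNIV (\<lambda>z::real^'n. z$i)" for i
    by (intro linear_continuous_on bounded_linear_vec_nth bounded_linear_ident)
  have fmeas: "f i j \<in> borel_measurable M" for i j
    unfolding f_def by (intro borel_measurable_times cont_M comp_cont ind_meas)
  have fint: "integrable M (f i j)" for i j
  proof (rule P.integrable_const_bound[where B=1])
    show "AE z in M. norm (f i j z) \<le> 1"
      using AE1
    proof (rule eventually_mono)
      fix z :: "real^'n" assume nz: "norm z = 1"
      have "\<bar>z$i\<bar> \<le> 1" "\<bar>z$j\<bar> \<le> 1" using component_le_norm_cart[of z] nz by metis+
      then have "\<bar>z$i * z$j\<bar> \<le> 1" by (simp add: abs_mult mult_le_one)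
      then show "norm (f i j z) \<le> 1" unfolding f_def using ind01[of z]
        by (simp add: abs_mult) (metis abs_ge_zero mult_le_one)
    qed
  qed (rule fmeas)
  have Aij: "A_mat M w ws $ i $ j = integral\<^sup>L M (f i j)" for i j
    unfolding A_mat_def f_def ind_def by simp
  define h where "h z = (v \<bullet> z)^2 * ind z" for z
  have hsum: "h z = (\<Sum>i\<in>UNIV. \<Sum>j\<in>UNIV. v$i * v$j * f i j z)" for z
  proof -
    have "h z = ((\<Sum>i\<in>UNIV. v$i * z$i) * (\<Sum>j\<in>UNIV. v$j * z$j)) * ind z"
      unfolding h_def by (simp add: inner_vec_def power2_eq_square)
    also have "\<dots> = (\<Sum>i\<in>UNIV. \<Sum>j\<in>UNIV. (v$i * z$i) * (v$j * z$j)) * ind z"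
      by (subst sum_product) (rule refl)
    also have "\<dots> = (\<Sum>i\<in>UNIV. (\<Sum>j\<in>UNIV. (v$i * z$i) * (v$j * z$j)) * ind z)"
      by (rule sum_distrib_right)
    also have "\<dots> = (\<Sum>i\<in>UNIV. \<Sum>j\<in>UNIV. (v$i * z$i) * (v$j * z$j) * ind z)"
      by (intro sum.cong refl sum_distrib_right)
    also have "\<dots> = (\<Sum>i\<in>UNIV. \<Sum>j\<in>UNIV. v$i * v$j * f i j z)"
      unfolding f_def by (intro sum.cong refl) (simp add: mult_ac)
    finally show ?thesis .
  qed
  have hfun: "h = (\<lambda>z. \<Sum>i\<in>UNIV. \<Sum>j\<in>UNIV. v$i * v$j * f i j z)"
    by (rule ext) (rule hsum)
  have quad: "v \<bullet> (A_mat M w ws *v v) = integral\<^sup>L M h"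
  proof -
    have "v \<bullet> (A_mat M w ws *v v) = (\<Sum>i\<in>UNIV. \<Sum>j\<in>UNIV. v$i * v$j * integral\<^sup>L M (f i j))"
      by (simp add: inner_vec_def matrix_vector_mult_def sum_distrib_left Aij mult_ac)
    also have "\<dots> = (\<Sum>i\<in>UNIV. \<Sum>j\<in>UNIV. integral\<^sup>L M (\<lambda>z. v$i * v$j * f i j z))"
      using fint by simp
    also have "\<dots> = (\<Sum>i\<in>UNIV. integral\<^sup>L M (\<lambda>z. \<Sum>j\<in>UNIV. v$i * v$j * f i j z))"
    proof (rule sum.cong[OF refl])
      fix i :: 'n
      show "(\<Sum>j\<in>UNIV. integral\<^sup>L M (\<lambda>z. v$i * v$j * f i j z)) = integral\<^sup>L M (\<lambda>z. \<Sum>j\<in>UNIV. v$i * v$j * f i j z)"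
        using Bochner_Integration.integral_sum[where I=UNIV and M=M and f="\<lambda>j z. v$i * v$j * f i j z"] fint by simp
    qed
    also have "\<dots> = integral\<^sup>L M (\<lambda>z. \<Sum>i\<in>UNIV. \<Sum>j\<in>UNIV. v$i * v$j * f i j z)"
      using Bochner_Integration.integral_sum[where I=UNIV and M=M and f="\<lambda>i z. \<Sum>j\<in>UNIV. v$i * v$j * f i j z"] fint by simp
    also have "\<dots> = integral\<^sup>L M h" by (simp add: hfun)
    finally show ?thesis .
  qed
  have hint: "integrable M h"
  proof -
    have "integrable M (\<lambda>z. \<Sum>i\<in>UNIV. \<Sum>j\<in>UNIV. v$i * v$j * f i j z)" using fint by auto
    then show ?thesis by (simp add: hfun)
  qed
  have iint: "integrable M (\<lambda>z. (v \<bullet> v) * ind z)"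
    using P.integrable_const_bound[where B=1 and f=ind] ind01 ind_meas by simp
  have "integral\<^sup>L M h \<le> integral\<^sup>L M (\<lambda>z. (v \<bullet> v) * ind z)"
  proof (rule integral_mono_AE[OF hint iint])
    show "AE z in M. h z \<le> (v \<bullet> v) * ind z"
      using AE1
    proof (rule eventually_mono)
      fix z :: "real^'n" assume nz: "norm z = 1"
      have "\<bar>v \<bullet> z\<bar> \<le> norm v" using Cauchy_Schwarz_ineq2[of v z] nz by simp
      then have "(v \<bullet> z)^2 \<le> (norm v)^2" by (metis abs_ge_zero power2_abs power_mono)
      then have "(v \<bullet> z)^2 \<le> v \<bullet> v" by (simp add: dot_square_norm)
      then show "h z \<le> (v \<bullet> v) * ind z" unfolding h_def using ind01[of z]
        by (simp add: mult_right_mono)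
    qed
  qed
  also have "\<dots> = (v \<bullet> v) * measure M S"
    using ind_eq space_M by simp
  finally have le: "v \<bullet> (A_mat M w ws *v v) \<le> (v \<bullet> v) * measure M S" using quad by simp
  have "v \<bullet> (A_mat M w ws *v v) = c * (v \<bullet> v)" using ev by simp
  then have "c * (v \<bullet> v) \<le> measure M S * (v \<bullet> v)" using le by (simp add: mult.commute)
  moreover have "v \<bullet> v > 0" using v by simp
  ultimately show ?thesis unfolding S_def by simp
qed


lemma angle_bound:
  fixes w ws :: "real^'n"
  assumes ws0: "ws \<noteq> 0" and w0: "w \<noteq> 0" and th: "vec_angle w ws \<le> pi / 2"
  shows "measure M {z. 0 \<le> w \<bullet> z \<and> ws \<bullet> z \<le> 0} \<le> vec_angle w ws"
proof -
  define a where "a = ws /\<^sub>R norm ws"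
  define w' where "w' = w /\<^sub>R norm w"
  have na: "norm a = 1" unfolding a_def using ws0 by simp
  have nw: "norm w' = 1" unfolding w'_def using w0 by simp
  have aa: "a \<bullet> a = 1" using na by (simp add: dot_square_norm)
  have ww: "w' \<bullet> w' = 1" using nw by (simp add: dot_square_norm)
  define ca where "ca = w' \<bullet> a"
  have ca_eq: "ca = (w \<bullet> ws) / (norm w * norm ws)" unfolding ca_def w'_def a_def by (simp add: field_simps)
  define t where "t = vec_angle w ws"
  have t_eq: "t = arccos ca" unfolding t_def vec_angle_def ca_eq ..
  have cab: "\<bar>ca\<bar> \<le> 1" unfolding ca_def using Cauchy_Schwarz_ineq2[of w' a] na nw by simp
  have cost: "cos t = ca" unfolding t_eq using cab by (intro cos_arccos) auto
  have t0: "0 \<le> t" unfolding t_eq using cab by (intro arccos_lbound) auto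
  have tpi: "t \<le> pi / 2" using th unfolding t_def .
  have seteq: "{z. 0 \<le> w \<bullet> z \<and> ws \<bullet> z \<le> 0} = {z. a \<bullet> z \<le> 0 \<and> 0 \<le> w' \<bullet> z}"
  proof -
    have "a \<bullet> z = (ws \<bullet> z) / norm ws" "w' \<bullet> z = (w \<bullet> z) / norm w" for z
      unfolding a_def w'_def by (simp_all add: divide_inverse mult.commute)
    moreover have "norm ws > 0" "norm w > 0" using ws0 w0 by auto
    ultimately show ?thesis by (auto simp: divide_le_0_iff zero_le_divide_iff)
  qed
  show ?thesis
  proof (cases "t = 0")
    case True
    then have ca1: "ca = 1" using cost by simp
    have "(w' - a) \<bullet> (w' - a) = 0"
      using aa ww ca1 unfolding ca_def by (simp add: inner_diff_left inner_diff_right inner_commute)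
    then have wa: "w' = a" by simp
    have "{z. a \<bullet> z \<le> 0 \<and> 0 \<le> w' \<bullet> z} \<subseteq> {z. a \<bullet> z = 0}" using wa by auto
    then have "measure M {z. a \<bullet> z \<le> 0 \<and> 0 \<le> w' \<bullet> z} \<le> measure M {z. a \<bullet> z = 0}"
      by (intro P.finite_measure_mono closed_M closed_hyperplane)
    also have "\<dots> = 0" by (rule hyp_null[OF aa])
    finally show ?thesis using seteq True t_def by simp
  next
    case False
    then have tp: "0 < t" using t0 by simp
    have sp: "sin t > 0" using tp tpi by (intro sin_gt_zero) auto
    define b where "b = (1 / sin t) *\<^sub>R (w' - ca *\<^sub>R a)"
    have ab: "a \<bullet> b = 0" unfolding b_def ca_def
      by (simp add: inner_diff_right aa inner_commute)
    have s2: "(sin t)^2 = 1 - ca^2" using sin_squared_eq[of t] cost by simp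
    have "b \<bullet> b = (1 / sin t)^2 * (1 - ca^2)" unfolding b_def ca_def
      by (simp add: inner_diff_left inner_diff_right aa ww inner_commute power2_eq_square algebra_simps)
    then have "b \<bullet> b = (1 / sin t)^2 * (sin t)^2" using s2 by simp
    then have bb: "b \<bullet> b = 1" using sp by (simp add: power_divide)
    have weq: "w' = cos t *\<^sub>R a + sin t *\<^sub>R b"
      unfolding b_def cost using sp by simp
    have "measure M {z. a \<bullet> z \<le> 0 \<and> 0 \<le> (cos t *\<^sub>R a + sin t *\<^sub>R b) \<bullet> z} \<le> t"
      by (rule wedge[OF aa bb ab tp tpi])
    then show ?thesis using seteq weq t_def by simp
  qed
qed

end

lemma A_sym: "A_mat M w ws $ i $ j = A_mat M w ws $ j $ i"
  unfolding A_mat_def by (simp add: mult.commute)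

theorem theorem7:
  fixes M :: "(real^'n) measure" and ws :: "real^'n" and \<phi> :: real
  assumes "prob_space M"
    and "sets M = sets borel"
    and "AE z in M. norm z = 1"
    and "\<And>f. orthogonal_transformation f \<Longrightarrow> distr M borel f = M"
    and "ws \<noteq> 0"
    and "0 \<le> \<phi>" and "\<phi> \<le> pi / 2"
  shows "\<forall>w. w \<noteq> 0 \<and> vec_angle w ws \<le> \<phi> \<longrightarrow> lambda_max (A_mat M w ws) \<le> \<phi>"
proof (intro allI impI)
  interpret R: rinv M by (rule rinv.intro[OF assms(1-4)])
  fix w :: "real^'n" assume w: "w \<noteq> 0 \<and> vec_angle w ws \<le> \<phi>"
  have th: "vec_angle w ws \<le> pi / 2" using w assms(7) by linarith
  show "lambda_max (A_mat M w ws) \<le> \<phi>"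
  proof (rule lambda_max_le[OF A_sym])
    fix c assume "c \<in> real_eigenvalues (A_mat M w ws)"
    then obtain v where v: "v \<noteq> 0" "A_mat M w ws *v v = c *\<^sub>R v" unfolding real_eigenvalues_def by blast
    have "c \<le> measure M {z. 0 \<le> w \<bullet> z \<and> ws \<bullet> z \<le> 0}" by (rule R.eig_bound[OF v])
    also have "\<dots> \<le> vec_angle w ws" using R.angle_bound[OF assms(5) _ th] w by blast
    finally show "c \<le> \<phi>" using w by linarith
  qed
qed

end
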